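(* For every odd prime $p$, $\gcd\big(S(2),\,2^p+1\big)=1$.
   Context: Let $p$ be an odd prime and $g$ an odd integer which is a primitive root modulo $p$ and modulo $2p$. Define $D_0^{(p)}=\{g^{2k}\bmod p : 0\le k\le \frac{p-1}{2}-1\}$, $D_1^{(p)}=\{g^{2k+1}\bmod p : 0\le k\le \frac{p-1}{2}-1\}$, $D_0^{(2p)}=\{g^{2k}\bmod 2p : 0\le k\le \frac{p-1}{2}-1\}$, $D_1^{(2p)}=\{g^{2k+1}\bmod 2p : 0\le k\le \frac{p-1}{2}-1\}$, viewed as subsets of $\{0,\dots,p-1\}$ resp. $\{0,1,\dots,2p-1\}$. For $j\in\{0,1\}$ let $2D_j^{(p)}=\{2a \bmod 2p : a\in D_j^{(p)}\}$. Let $C_1=D_1^{(2p)}\cup 2D_1^{(p)}\cup\{0\}$ and $C_0=D_0^{(2p)}\cup 2D_0^{(p)}\cup\{p\}$ (these partition $\{0,\dots,2p-1\}$). The binary sequence $s$ of period $2p$ is $s_i=1$ if $i\bmod 2p\in C_1$ and $s_i=0$ otherwise, and $S(2)=\sum_{i=0}^{2p-1}s_i2^i\in\mathbb{Z}$. *)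

theory Defs
  imports "HOL-Number_Theory.Number_Theory"
begin

definition int_primroot :: "nat \<Rightarrow> int \<Rightarrow> bool" where
  "int_primroot m g \<longleftrightarrow> residue_primroot m (nat (g mod int m))"

definition D0p :: "nat \<Rightarrow> int \<Rightarrow> nat set" where
  "D0p p g = {nat (g ^ (2*k) mod int p) | k. k < (p - 1) div 2}"
definition D1p :: "nat \<Rightarrow> int \<Rightarrow> nat set" where
  "D1p p g = {nat (g ^ (2*k+1) mod int p) | k. k < (p - 1) div 2}"
definition D0_2p :: "nat \<Rightarrow> int \<Rightarrow> nat set" where
  "D0_2p p g = {nat (g ^ (2*k) mod int (2*p)) | k. k < (p - 1) div 2}"
definition D1_2p :: "nat \<Rightarrow> int \<Rightarrow> nat set" where
  "D1_2p p g = {nat (g ^ (2*k+1) mod int (2*p)) | k. k < (p - 1) div 2}"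

definition C1 :: "nat \<Rightarrow> int \<Rightarrow> nat set" where
  "C1 p g = D1_2p p g \<union> (\<lambda>a. (2*a) mod (2*p)) ` D1p p g \<union> {0}"
definition C0 :: "nat \<Rightarrow> int \<Rightarrow> nat set" where
  "C0 p g = D0_2p p g \<union> (\<lambda>a. (2*a) mod (2*p)) ` D0p p g \<union> {p}"

definition seq_s :: "nat \<Rightarrow> int \<Rightarrow> nat \<Rightarrow> int" where
  "seq_s p g i = (if i mod (2*p) \<in> C1 p g then 1 else 0)"

definition S2 :: "nat \<Rightarrow> int \<Rightarrow> int" where
  "S2 p g = (\<Sum>i<2*p. seq_s p g i * 2 ^ i)"

end

theory Submission
  imports Defs
begin


lemma small_cong_eq:
  fixes x y :: int
  assumes "\<bar>x\<bar> \<le> 1" "\<bar>y\<bar> \<le> 1" "[x = y] (mod m)" "m > 2"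
  shows "x = y"
proof -
  have "m dvd (x - y)" using assms(3) by (simp add: cong_iff_dvd_diff)
  moreover have "\<bar>x - y\<bar> < m" using assms by auto
  ultimately show ?thesis
    using dvd_imp_le_int[of "x-y" m] abs_dvd_iff[of m "x-y"] by (cases "x = y") auto
qed

lemma Legendre_abs: "\<bar>Legendre a p\<bar> \<le> 1"
  by (simp add: Legendre_def)

lemma Legendre_cong:
  assumes "[a = b] (mod p)" shows "Legendre a p = Legendre b p"
proof -
  have "[a = 0] (mod p) \<longleftrightarrow> [b = 0] (mod p)" using assms
    by (meson cong_sym cong_trans)
  moreover have "QuadRes p a \<longleftrightarrow> QuadRes p b" using assms unfolding QuadRes_def
    by (meson cong_sym cong_trans)
  ultimately show ?thesis by (simp add: Legendre_def)
qed

lemma Legendre_mult: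
  fixes p :: nat
  assumes "prime p" "2 < p"
  shows "Legendre (a*b) (int p) = Legendre a (int p) * Legendre b (int p)"
proof -
  have "[Legendre (a*b) p = (a*b) ^ ((p - 1) div 2)] (mod p)"
    using euler_criterion[OF assms] by blast
  moreover have "[Legendre a p * Legendre b p = a ^ ((p - 1) div 2) * b ^ ((p - 1) div 2)] (mod p)"
    using euler_criterion[OF assms] cong_mult by blast
  ultimately have "[Legendre (a*b) p = Legendre a p * Legendre b p] (mod p)"
    by (metis cong_sym cong_trans power_mult_distrib)
  moreover have "\<bar>Legendre a p * Legendre b p\<bar> \<le> 1"
    using Legendre_abs[of a p] Legendre_abs[of b p] by (simp add: abs_mult mult_le_one)
  ultimately show ?thesis using small_cong_eq Legendre_abs assms(2) by (metis of_nat_less_iff of_nat_numeral)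
qed

lemma Legendre_one: "p > 1 \<Longrightarrow> Legendre 1 p = 1"
  unfolding Legendre_def QuadRes_def
  by (auto simp: cong_def intro!: exI[of _ 1])

lemma Legendre_pow:
  fixes p :: nat
  assumes "prime p" "2 < p"
  shows "Legendre (a^n) (int p) = Legendre a (int p) ^ n"
  by (induction n) (use assms in \<open>simp_all add: Legendre_one Legendre_mult\<close>)

lemma Legendre_unit:
  "\<not> [a = 0] (mod p) \<Longrightarrow> Legendre a p = 1 \<or> Legendre a p = -1"
  by (simp add: Legendre_def)

lemma Legendre_zero:
  "[a = 0] (mod p) \<Longrightarrow> Legendre a p = 0"
  by (simp add: Legendre_def)



lemma pow_gcd_cong:
  fixes x :: int
  assumes "[x ^ a = 1] (mod m)" "[x ^ b = 1] (mod m)" "a \<noteq> 0"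
  shows "[x ^ gcd a b = 1] (mod m)"
proof -
  obtain u v where uv: "a * u = b * v + gcd a b" using bezout_nat[OF assms(3)] by blast
  have "[x ^ (a*u) = 1] (mod m)"
    using cong_pow[OF assms(1), of u] by (simp add: power_mult)
  moreover have "[x ^ (b*v + gcd a b) = x ^ gcd a b] (mod m)"
    using cong_mult[OF cong_pow[OF assms(2), of v] cong_refl[of "x ^ gcd a b"]]
    by (simp add: power_add power_mult)
  ultimately show ?thesis using uv by (metis cong_sym cong_trans)
qed

lemma pow_mod_cong:
  fixes x :: int
  assumes "[x ^ p = 1] (mod m)"
  shows "[x ^ k = x ^ (k mod p)] (mod m)"
proof -
  have "x ^ k = (x ^ p) ^ (k div p) * x ^ (k mod p)"
    by (simp add: power_add[symmetric] power_mult[symmetric])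
  moreover have "[(x ^ p) ^ (k div p) * x ^ (k mod p) = 1 ^ (k div p) * x ^ (k mod p)] (mod m)"
    by (intro cong_mult cong_pow assms cong_refl)
  ultimately show ?thesis by simp
qed

lemma mult_bij:
  fixes p a :: nat
  assumes "prime p" "\<not> p dvd a"
  shows "bij_betw (\<lambda>t. a * t mod p) {1..<p} {1..<p}"
proof -
  have cop: "coprime a p" using prime_imp_coprime[OF assms] by (simp add: ac_simps)
  have inj: "inj_on (\<lambda>t. a * t mod p) {1..<p}"
  proof
    fix x y assume xy: "x \<in> {1..<p}" "y \<in> {1..<p}" "a * x mod p = a * y mod p"
    then have "[a * x = a * y] (mod p)" by (simp add: cong_def)
    then have "[x = y] (mod p)" using cong_mult_lcancel_nat[OF cop] by blast
    then show "x = y" using xy cong_less_modulus_unique_nat by auto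
  qed
  have sub: "(\<lambda>t. a * t mod p) ` {1..<p} \<subseteq> {1..<p}"
  proof
    fix z assume "z \<in> (\<lambda>t. a * t mod p) ` {1..<p}"
    then obtain t where t: "t \<in> {1..<p}" "z = a * t mod p" by blast
    have "\<not> p dvd t" using t by (auto dest: dvd_imp_le)
    then have "\<not> p dvd a * t" using assms prime_dvd_mult_iff by blast
    then have "z \<noteq> 0" using t by (auto simp: dvd_eq_mod_eq_0)
    moreover have "z < p" using t assms prime_gt_0_nat by auto
    ultimately show "z \<in> {1..<p}" by auto
  qed
  show ?thesis unfolding bij_betw_def using inj endo_inj_surj[OF _ sub inj] by auto
qed



lemma Legendre_nat_mod:
  fixes p a t :: nat
  shows "Legendre (int (a * t mod p)) (int p) = Legendre (int a * int t) (int p)"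
  by (rule Legendre_cong) (simp add: cong_def of_nat_mod)

lemma Legendre_nz:
  fixes p t :: nat
  assumes "t \<in> {1..<p}"
  shows "Legendre (int t) (int p) = 1 \<or> Legendre (int t) (int p) = -1"
proof -
  have "\<not> [int t = 0] (mod int p)" using assms
    by (auto simp: cong_def)
  then show ?thesis by (rule Legendre_unit)
qed

lemma sum_Legendre_zero:
  fixes p :: nat and n :: int
  assumes "prime p" "2 < p" "Legendre n (int p) = -1"
  shows "(\<Sum>t\<in>{1..<p}. Legendre (int t) (int p)) = 0"
proof -
  define a where "a = nat (n mod int p)"
  have ia: "int a = n mod int p" unfolding a_def using assms(2) by simp
  have "Legendre (int a) (int p) = -1" using assms(3) ia
    by (metis Legendre_cong cong_mod_left cong_refl)
  then have "\<not> [int a = 0] (mod int p)" using Legendre_zero by fastforce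
  then have nd: "\<not> p dvd a"
    by (metis cong_0_iff int_dvd_int_iff)
  have bij: "bij_betw (\<lambda>t. a * t mod p) {1..<p} {1..<p}" using mult_bij[OF assms(1) nd] .
  have "(\<Sum>t\<in>{1..<p}. Legendre (int t) (int p)) =
        (\<Sum>t\<in>{1..<p}. Legendre (int (a * t mod p)) (int p))"
    using sum.reindex_bij_betw[OF bij, of "\<lambda>t. Legendre (int t) (int p)"] by simp
  also have "\<dots> = (\<Sum>t\<in>{1..<p}. - Legendre (int t) (int p))"
    using Legendre_nat_mod Legendre_mult[OF assms(1,2)] \<open>Legendre (int a) (int p) = -1\<close>
    by simp
  finally show ?thesis by (simp add: sum_negf)
qed

lemma E_cong:
  fixes p r m :: nat and \<gamma> :: int
  assumes "prime p" "prime r" "[\<gamma> ^ p = 1] (mod int r)" "\<not> [\<gamma> = 1] (mod int r)"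
    "m > 0" "\<not> p dvd m"
  shows "[(\<Sum>i\<in>{1..<p}. \<gamma> ^ (i * m)) = -1] (mod int r)"
proof -
  define x where "x = \<gamma> ^ m"
  have cop: "gcd m p = 1" using assms(1,6) prime_imp_coprime[OF assms(1) assms(6)]
    by (simp add: ac_simps)
  have "\<not> [x = 1] (mod int r)"
  proof
    assume "[x = 1] (mod int r)"
    then have "[\<gamma> ^ gcd m p = 1] (mod int r)"
      using pow_gcd_cong[of \<gamma> m "int r" p] assms(3,5) unfolding x_def by auto
    then show False using cop assms(4) by simp
  qed
  then have nd: "\<not> int r dvd (x - 1)" by (simp add: cong_iff_dvd_diff)
  have "[x ^ p = 1] (mod int r)" unfolding x_def
    using cong_pow[OF assms(3), of m] by (simp add: power_mult[symmetric] mult.commute)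
  then have "int r dvd x ^ p - 1" by (simp add: cong_iff_dvd_diff)
  then have "int r dvd (x - 1) * (\<Sum>i<p. x ^ i)" by (simp add: power_diff_1_eq)
  moreover have "prime (int r)" using assms(2) by (simp add: prime_nat_int_transfer)
  ultimately have d: "int r dvd (\<Sum>i<p. x ^ i)" using nd prime_dvd_mult_iff by blast
  have p0: "p > 0" using assms(1) prime_gt_0_nat by blast
  have "{..<p} = insert 0 {1..<p}" using p0 by auto
  then have "(\<Sum>i<p. x ^ i) = 1 + (\<Sum>i\<in>{1..<p}. x ^ i)" by simp
  moreover have "(\<Sum>i\<in>{1..<p}. \<gamma> ^ (i * m)) = (\<Sum>i\<in>{1..<p}. x ^ i)"
    unfolding x_def by (simp add: power_mult[symmetric] mult.commute)
  ultimately show ?thesis using d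
    by (simp add: cong_iff_dvd_diff algebra_simps)
qed

lemma E_cong_p:
  fixes p r :: nat and \<gamma> :: int
  assumes "[\<gamma> ^ p = 1] (mod int r)" "p > 0"
  shows "[(\<Sum>i\<in>{1..<p}. \<gamma> ^ (i * p)) = int p - 1] (mod int r)"
proof -
  have "[(\<Sum>i\<in>{1..<p}. \<gamma> ^ (i * p)) = (\<Sum>i\<in>{1..<p}. 1)] (mod int r)"
  proof (rule cong_sum)
    fix i show "[\<gamma> ^ (i * p) = 1] (mod int r)"
      using cong_pow[OF assms(1), of i] by (simp add: power_mult[symmetric] mult.commute)
  qed
  then show ?thesis using assms(2) by (simp add: of_nat_diff)
qed



lemma gauss_sq:
  fixes p r :: nat and \<gamma> n :: int
  assumes pp: "prime p" "2 < p" and rp: "prime r"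
    and g1: "[\<gamma> ^ p = 1] (mod int r)" and g2: "\<not> [\<gamma> = 1] (mod int r)"
    and nr: "Legendre n (int p) = -1"
  shows "[(\<Sum>i\<in>{1..<p}. Legendre (int i) (int p) * \<gamma> ^ i)^2
          = Legendre (int (p - 1)) (int p) * int p] (mod int r)"
proof -
  define L where "L t = Legendre (int t) (int p)" for t :: nat
  define A where "A = {1..<p::nat}"
  define c where "c t = (if t = p - 1 then int p - 1 else -1)" for t :: nat
  have p0: "p > 0" using pp by auto
  have Lsq: "L i * L i = 1" if "i \<in> A" for i
    using Legendre_nz[of i p] that unfolding L_def A_def by auto
  have Lm: "L (i * t mod p) = L i * L t" for i t
    unfolding L_def using Legendre_nat_mod Legendre_mult[OF pp] by simp
  have "(\<Sum>i\<in>A. L i * \<gamma> ^ i)^2 = (\<Sum>i\<in>A. \<Sum>j\<in>A. (L i * \<gamma> ^ i) * (L j * \<gamma> ^ j))"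
    by (simp add: power2_eq_square sum_product)
  also have "\<dots> = (\<Sum>i\<in>A. \<Sum>t\<in>A. L t * \<gamma> ^ (i + i * t mod p))"
  proof (rule sum.cong[OF refl])
    fix i assume iA: "i \<in> A"
    have nd: "\<not> p dvd i" using iA unfolding A_def by (auto dest: dvd_imp_le)
    have bij: "bij_betw (\<lambda>t. i * t mod p) A A" unfolding A_def using mult_bij[OF pp(1) nd] .
    have "(\<Sum>j\<in>A. (L i * \<gamma> ^ i) * (L j * \<gamma> ^ j)) =
          (\<Sum>t\<in>A. (L i * \<gamma> ^ i) * (L (i * t mod p) * \<gamma> ^ (i * t mod p)))"
      using sum.reindex_bij_betw[OF bij, of "\<lambda>j. (L i * \<gamma> ^ i) * (L j * \<gamma> ^ j)"] by simp
    also have "\<dots> = (\<Sum>t\<in>A. L t * \<gamma> ^ (i + i * t mod p))"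
    proof (rule sum.cong[OF refl])
      fix t assume "t \<in> A"
      have "(L i * \<gamma> ^ i) * (L (i * t mod p) * \<gamma> ^ (i * t mod p))
            = (L i * L i) * L t * (\<gamma> ^ i * \<gamma> ^ (i * t mod p))"
        by (simp add: Lm algebra_simps)
      also have "\<dots> = L t * \<gamma> ^ (i + i * t mod p)" using Lsq[OF iA] by (simp add: power_add)
      finally show "(L i * \<gamma> ^ i) * (L (i * t mod p) * \<gamma> ^ (i * t mod p)) = L t * \<gamma> ^ (i + i * t mod p)" .
    qed
    finally show "(\<Sum>j\<in>A. (L i * \<gamma> ^ i) * (L j * \<gamma> ^ j)) = (\<Sum>t\<in>A. L t * \<gamma> ^ (i + i * t mod p))" .
  qed
  also have "[\<dots> = (\<Sum>i\<in>A. \<Sum>t\<in>A. L t * \<gamma> ^ (i * (t + 1)))] (mod int r)"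
  proof (intro cong_sum cong_mult cong_refl)
    fix i t
    have "[\<gamma> ^ (i + i * t mod p) = \<gamma> ^ ((i + i * t mod p) mod p)] (mod int r)"
      by (rule pow_mod_cong[OF g1])
    moreover have "(i + i * t mod p) mod p = (i * (t + 1)) mod p"
      by (simp add: mod_add_right_eq algebra_simps)
    moreover have "[\<gamma> ^ (i * (t + 1)) = \<gamma> ^ ((i * (t + 1)) mod p)] (mod int r)"
      by (rule pow_mod_cong[OF g1])
    ultimately show "[\<gamma> ^ (i + i * t mod p) = \<gamma> ^ (i * (t + 1))] (mod int r)"
      by (metis cong_sym cong_trans)
  qed
  also have "(\<Sum>i\<in>A. \<Sum>t\<in>A. L t * \<gamma> ^ (i * (t + 1))) = (\<Sum>t\<in>A. L t * (\<Sum>i\<in>A. \<gamma> ^ (i * (t + 1))))"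
    by (subst sum.swap) (simp add: sum_distrib_left)
  also have "[\<dots> = (\<Sum>t\<in>A. L t * c t)] (mod int r)"
  proof (intro cong_sum cong_mult cong_refl)
    fix t assume tA: "t \<in> A"
    show "[(\<Sum>i\<in>A. \<gamma> ^ (i * (t + 1))) = c t] (mod int r)"
    proof (cases "t = p - 1")
      case True
      then have "t + 1 = p" using p0 by simp
      then show ?thesis using E_cong_p[OF g1 p0] True unfolding c_def A_def by simp
    next
      case False
      then have "\<not> p dvd (t + 1)" using tA unfolding A_def by (auto dest: dvd_imp_le)
      then show ?thesis using E_cong[OF pp(1) rp g1 g2, of "t+1"] False unfolding c_def A_def by simp
    qed
  qed
  also have "(\<Sum>t\<in>A. L t * c t) = (\<Sum>t\<in>A. - L t + (if t = p - 1 then int p * L t else 0))"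
    by (rule sum.cong) (auto simp: c_def algebra_simps)
  also have "\<dots> = - (\<Sum>t\<in>A. L t) + int p * L (p - 1)"
  proof -
    have "p - 1 \<in> A" using pp unfolding A_def by auto
    then have "(\<Sum>t\<in>A. (if t = p - 1 then int p * L t else 0)) = int p * L (p - 1)"
      unfolding A_def by (subst sum.delta) auto
    then show ?thesis by (simp add: sum.distrib sum_negf sum_subtractf)
  qed
  also have "\<dots> = L (p - 1) * int p"
    using sum_Legendre_zero[OF pp nr] unfolding L_def A_def by simp
  finally show ?thesis unfolding L_def A_def .
qed



lemma Lg:
  fixes p :: nat and g :: int
  assumes pp: "prime p" "odd p" and pr: "int_primroot p g"
  shows "Legendre g (int p) = -1"
proof -
  define g0 where "g0 = nat (g mod int p)"
  have p2: "2 < p" using pp prime_ge_2_nat[OF pp(1)] by (cases "p = 2") auto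
  have rp: "residue_primroot p g0" using pr unfolding int_primroot_def g0_def by simp
  then have cop: "coprime p g0" and ordg: "ord p g0 = p - 1"
    using totient_prime[OF pp(1)] by (auto simp: residue_primroot_def)
  define h where "h = (p - 1) div 2"
  have h0: "0 < h" "h < p - 1" using p2 unfolding h_def by auto
  have nh: "\<not> [g0 ^ h = 1] (mod p)" using ord_minimal[OF h0(1)] h0(2) ordg by simp
  have ig0: "int g0 = g mod int p" unfolding g0_def using p2 by simp
  have cg: "[int g0 = g] (mod int p)" using ig0 by (simp add: cong_def)
  have eu: "[Legendre g (int p) = g ^ h] (mod int p)" using euler_criterion[OF pp(1) p2] h_def by simp
  have "Legendre g (int p) \<noteq> 1"
  proof
    assume "Legendre g (int p) = 1"
    then have "[g ^ h = 1] (mod int p)" using eu by (metis cong_sym)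
    moreover have "[int g0 ^ h = g ^ h] (mod int p)" using cong_pow[OF cg] .
    ultimately have "[int (g0 ^ h) = int 1] (mod int p)" by (metis cong_trans of_nat_power of_nat_1)
    then show False using nh cong_int_iff by blast
  qed
  moreover have "Legendre g (int p) \<noteq> 0"
  proof
    assume "Legendre g (int p) = 0"
    then have "[g = 0] (mod int p)" by (auto simp: Legendre_def split: if_splits)
    then have "[int g0 = int 0] (mod int p)" using cg by (metis cong_trans of_nat_0)
    then have "p dvd g0" using cong_int_iff by (metis cong_0_iff)
    then have "p dvd 1" using cop by (metis coprime_common_divisor dvd_refl)
    then show False using p2 by simp
  qed
  ultimately show ?thesis using Legendre_abs[of g "int p"] by (auto simp: Legendre_def split: if_splits)
qed



lemma D1p_char:
  fixes p :: nat and g :: int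
  assumes pp: "prime p" "odd p" and pr: "int_primroot p g"
  shows "D1p p g = {y. 0 < y \<and> y < p \<and> Legendre (int y) (int p) = -1}"
proof -
  have p2: "2 < p" using pp prime_ge_2_nat[OF pp(1)] by (cases "p = 2") auto
  have Lg': "Legendre g (int p) = -1" using Lg[OF pp pr] .
  show ?thesis
  proof (rule Set.set_eqI, rule iffI)
    fix y assume "y \<in> D1p p g"
    then obtain k where k: "y = nat (g ^ (2*k+1) mod int p)" unfolding D1p_def by blast
    have iy: "int y = g ^ (2*k+1) mod int p" using k p2 by simp
    have "Legendre (int y) (int p) = Legendre (g ^ (2*k+1)) (int p)"
      using iy by (intro Legendre_cong) (simp add: cong_def)
    also have "\<dots> = -1" by (simp only: Legendre_pow[OF pp(1) p2] Lg') simp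
    finally have Ly: "Legendre (int y) (int p) = -1" .
    then have "y \<noteq> 0" by (cases "y = 0") (auto simp: Legendre_def)
    moreover have "int y < int p" using iy p2 by simp
    then have "y < p" by simp
    ultimately show "y \<in> {y. 0 < y \<and> y < p \<and> Legendre (int y) (int p) = -1}" using Ly by simp
  next
    fix y assume y: "y \<in> {y. 0 < y \<and> y < p \<and> Legendre (int y) (int p) = -1}"
    define g0 where "g0 = nat (g mod int p)"
    have rp: "residue_primroot p g0" using pr unfolding int_primroot_def g0_def by simp
    have gen: "bij_betw (\<lambda>i. g0 ^ i mod p) {..<totient p} (totatives p)"
      using residue_primroot_is_generator[OF _ rp] p2 by simp
    have "\<not> p dvd y" using y by (auto dest: dvd_imp_le)
    then have "coprime p y" using prime_imp_coprime[OF pp(1)] by blast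
    then have "y \<in> totatives p" using y by (auto simp: totatives_def ac_simps)
    then have "y \<in> (\<lambda>i. g0 ^ i mod p) ` {..<p - 1}"
      using gen totient_prime[OF pp(1)] unfolding bij_betw_def by simp
    then obtain n where n: "n < p - 1" "g0 ^ n mod p = y" by auto
    have ig0: "int g0 = g mod int p" unfolding g0_def using p2 by simp
    have cg: "[int g0 = g] (mod int p)" using ig0 by (simp add: cong_def)
    have iy: "int y = g ^ n mod int p"
    proof -
      have "int y = int g0 ^ n mod int p" using n(2) by (metis of_nat_mod of_nat_power)
      also have "\<dots> = g ^ n mod int p" using cong_pow[OF cg, of n] by (simp add: cong_def)
      finally show ?thesis .
    qed
    have "Legendre (int y) (int p) = Legendre (g ^ n) (int p)"
      using iy by (intro Legendre_cong) (simp add: cong_def)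
    also have "\<dots> = (-1) ^ n" by (simp only: Legendre_pow[OF pp(1) p2] Lg')
    finally have "(-1::int) ^ n = -1" using y by simp
    then have "odd n" by (cases "even n") auto
    then obtain k where k: "n = 2*k+1" by (rule oddE)
    have "k < (p - 1) div 2" using n(1) k by simp
    moreover have "y = nat (g ^ (2*k+1) mod int p)" using iy k by simp
    ultimately show "y \<in> D1p p g" unfolding D1p_def by blast
  qed
qed



lemma D1_2p_char:
  fixes p :: nat and g :: int
  assumes pp: "prime p" "odd p" and og: "odd g" and pr: "int_primroot p g"
  shows "D1_2p p g = {x. x < 2*p \<and> odd x \<and> Legendre (int x) (int p) = -1}"
proof -
  have p2: "2 < p" using pp prime_ge_2_nat[OF pp(1)] by (cases "p = 2") auto
  have Lg': "Legendre g (int p) = -1" using Lg[OF pp pr] .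
  show ?thesis
  proof (rule Set.set_eqI, rule iffI)
    fix x assume "x \<in> D1_2p p g"
    then obtain k where k: "x = nat (g ^ (2*k+1) mod int (2*p))" unfolding D1_2p_def by blast
    have ix: "int x = g ^ (2*k+1) mod (2 * int p)" using k p2 by simp
    have "int x < 2 * int p" using ix p2 by simp
    then have x1: "x < 2*p" by simp
    have "int x mod 2 = g ^ (2*k+1) mod 2" using ix by (simp add: mod_mod_cancel)
    also have "\<dots> = 1" using og by (simp add: odd_iff_mod_2_eq_one[symmetric])
    finally have x2: "odd x" by (simp add: odd_iff_mod_2_eq_one[symmetric])
    have "int x mod int p = g ^ (2*k+1) mod int p" using ix by (simp add: mod_mod_cancel)
    then have "Legendre (int x) (int p) = Legendre (g ^ (2*k+1)) (int p)"
      by (intro Legendre_cong) (simp add: cong_def)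
    also have "\<dots> = -1" by (simp only: Legendre_pow[OF pp(1) p2] Lg') simp
    finally show "x \<in> {x. x < 2*p \<and> odd x \<and> Legendre (int x) (int p) = -1}" using x1 x2 by simp
  next
    fix x assume x: "x \<in> {x. x < 2*p \<and> odd x \<and> Legendre (int x) (int p) = -1}"
    define y where "y = x mod p"
    have "Legendre (int y) (int p) = Legendre (int x) (int p)" unfolding y_def
      by (intro Legendre_cong) (simp add: cong_def of_nat_mod)
    then have Ly: "Legendre (int y) (int p) = -1" using x by simp
    have "y \<noteq> 0" using Ly by (cases "y = 0") (auto simp: Legendre_def)
    moreover have "y < p" unfolding y_def using p2 by simp
    ultimately have "y \<in> D1p p g" using D1p_char[OF pp pr] Ly by simp
    then obtain k where k: "k < (p - 1) div 2" "y = nat (g ^ (2*k+1) mod int p)"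
      unfolding D1p_def by blast
    define z where "z = g ^ (2*k+1) mod (2 * int p)"
    have "z mod int p = g ^ (2*k+1) mod int p" unfolding z_def by (simp add: mod_mod_cancel)
    also have "\<dots> = int y" using k(2) p2 by simp
    also have "\<dots> = int x mod int p" unfolding y_def by (simp add: of_nat_mod)
    finally have "int p dvd z - int x" by (simp add: mod_eq_dvd_iff)
    moreover have "z mod 2 = g ^ (2*k+1) mod 2" unfolding z_def by (simp add: mod_mod_cancel)
    then have "z mod 2 = 1" using og by (simp add: odd_iff_mod_2_eq_one[symmetric])
    moreover have "int x mod 2 = 1" using x by (simp add: odd_iff_mod_2_eq_one[symmetric])
    ultimately have "2 dvd z - int x" "int p dvd z - int x" by (auto simp: mod_eq_dvd_iff)
    moreover have "coprime 2 (int p)" using pp(2) by simp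
    ultimately have "2 * int p dvd z - int x" using divides_mult by blast
    then have "z mod (2 * int p) = int x mod (2 * int p)" by (simp add: mod_eq_dvd_iff)
    moreover have "z mod (2 * int p) = z" unfolding z_def by simp
    moreover have "int x mod (2 * int p) = int x" using x by simp
    ultimately have "int x = z" by simp
    then have "x = nat (g ^ (2*k+1) mod int (2*p))" unfolding z_def by simp
    then show "x \<in> D1_2p p g" using k(1) unfolding D1_2p_def by blast
  qed
qed



lemma C1_char:
  fixes p :: nat and g :: int
  assumes pp: "prime p" "odd p" and og: "odd g" and pr: "int_primroot p g" and i: "i < 2*p"
  shows "i \<in> C1 p g \<longleftrightarrow> i = 0 \<or> (odd i \<and> Legendre (int i) (int p) = -1)
            \<or> (even i \<and> 0 < i \<and> Legendre (int (i div 2)) (int p) = -1)"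
proof -
  have img: "(\<lambda>a. (2*a) mod (2*p)) ` D1p p g = (\<lambda>a. 2*a) ` D1p p g"
  proof (rule image_cong[OF refl])
    fix a assume "a \<in> D1p p g"
    then have "a < p" using D1p_char[OF pp pr] by simp
    then show "(2*a) mod (2*p) = 2*a" by simp
  qed
  have "i \<in> (\<lambda>a. 2*a) ` D1p p g \<longleftrightarrow> (even i \<and> 0 < i \<and> Legendre (int (i div 2)) (int p) = -1)"
  proof
    assume "i \<in> (\<lambda>a. 2*a) ` D1p p g"
    then obtain a where a: "a \<in> D1p p g" "i = 2*a" by blast
    then show "even i \<and> 0 < i \<and> Legendre (int (i div 2)) (int p) = -1"
      using D1p_char[OF pp pr] by auto
  next
    assume h: "even i \<and> 0 < i \<and> Legendre (int (i div 2)) (int p) = -1"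
    have lt: "i div 2 < p" using i by linarith
    have gt: "0 < i div 2" using h by (auto elim: evenE)
    have "i div 2 \<in> D1p p g" unfolding D1p_char[OF pp pr] using lt gt h by blast
    moreover have "i = 2 * (i div 2)" using h by simp
    ultimately show "i \<in> (\<lambda>a. 2*a) ` D1p p g" by blast
  qed
  moreover have "i \<in> D1_2p p g \<longleftrightarrow> odd i \<and> Legendre (int i) (int p) = -1"
    using D1_2p_char[OF pp og pr] i by simp
  moreover have "i \<in> C1 p g \<longleftrightarrow> i \<in> D1_2p p g \<or> i \<in> (\<lambda>a. 2*a) ` D1p p g \<or> i = 0"
    unfolding C1_def img by blast
  ultimately show ?thesis by blast
qed

lemma seq_s_val:
  fixes p :: nat and g :: int
  assumes "i < 2*p"
  shows "seq_s p g i = (if i \<in> C1 p g then 1 else 0)"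
  using assms unfolding seq_s_def by simp

lemma S2_split:
  fixes p :: nat and g :: int
  shows "S2 p g = (\<Sum>i<p. seq_s p g i * 2^i) + 2^p * (\<Sum>i<p. seq_s p g (i+p) * 2^i)"
proof -
  have u: "{..<2*p} = {..<p} \<union> {p..<p+p}" by auto
  have "S2 p g = (\<Sum>i<p. seq_s p g i * 2^i) + (\<Sum>i\<in>{p..<p+p}. seq_s p g i * 2^i)"
    unfolding S2_def u by (subst sum.union_disjoint) auto
  also have "(\<Sum>i\<in>{p..<p+p}. seq_s p g i * 2^i) = (\<Sum>i\<in>{0..<p}. seq_s p g (i+p) * 2^(i+p))"
    using sum.shift_bounds_nat_ivl[of "\<lambda>i. seq_s p g i * 2^i" 0 p p] by simp
  also have "\<dots> = 2^p * (\<Sum>i<p. seq_s p g (i+p) * 2^i)"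
    by (simp add: sum_distrib_left power_add atLeast0LessThan algebra_simps)
  finally show ?thesis .
qed



lemma Legendre_three: "Legendre a p \<in> {-1, 0, 1}"
  by (simp add: Legendre_def)

lemma d_val:
  fixes p :: nat and g :: int
  assumes pp: "prime p" "odd p" and og: "odd g" and pr: "int_primroot p g"
    and i: "1 \<le> i" "i < p"
  shows "seq_s p g i - seq_s p g (i+p) =
         (if Legendre 2 (int p) = 1 then 0 else (-1)^i * Legendre (int i) (int p))"
proof -
  have p2: "2 < p" using pp prime_ge_2_nat[OF pp(1)] by (cases "p = 2") auto
  define L where "L x = Legendre x (int p)" for x
  have Li: "L (int i) = 1 \<or> L (int i) = -1" using Legendre_nz[of i p] i unfolding L_def by simp
  have "\<not> [2 = 0] (mod int p)" using p2 by (simp add: cong_def)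
  then have e: "L 2 = 1 \<or> L 2 = -1" unfolding L_def by (rule Legendre_unit)
  have Lip: "L (int (i+p)) = L (int i)" unfolding L_def by (rule Legendre_cong) (simp add: cong_def)
  have halfL: "L (int j) = L 2 * L (int (j div 2))" if "even j" for j
  proof -
    have "int j = 2 * int (j div 2)" using that by (auto elim: evenE)
    then show ?thesis unfolding L_def using Legendre_mult[OF pp(1) p2] by metis
  qed
  have C: "seq_s p g j = (if j = 0 \<or> (odd j \<and> L (int j) = -1) \<or> (even j \<and> 0 < j \<and> L (int (j div 2)) = -1) then 1 else 0)"
    if "j < 2*p" for j
    using seq_s_val[OF that] C1_char[OF pp og pr that] unfolding L_def by simp
  show ?thesis
  proof (cases "odd i")
    case True
    have s1: "seq_s p g i = (if L (int i) = -1 then 1 else 0)" using C[of i] i True by simp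
    have ev: "even (i+p)" using True pp(2) by simp
    have s2: "seq_s p g (i+p) = (if L (int ((i+p) div 2)) = -1 then 1 else 0)"
      using C[of "i+p"] i ev by simp
    have h: "L (int i) = L 2 * L (int ((i+p) div 2))" using halfL[OF ev] Lip by simp
    have t: "L (int ((i+p) div 2)) \<in> {-1,0,1}" unfolding L_def by (rule Legendre_three)
    show ?thesis using s1 s2 h t e Li True unfolding L_def[symmetric] by auto
  next
    case False
    have s1: "seq_s p g i = (if L (int (i div 2)) = -1 then 1 else 0)" using C[of i] i False by simp
    have od: "odd (i+p)" using False pp(2) by simp
    have s2: "seq_s p g (i+p) = (if L (int i) = -1 then 1 else 0)"
      using C[of "i+p"] i od Lip by simp
    have h: "L (int i) = L 2 * L (int (i div 2))" using halfL False by simp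
    have t: "L (int (i div 2)) \<in> {-1,0,1}" unfolding L_def by (rule Legendre_three)
    show ?thesis using s1 s2 h t e Li False unfolding L_def[symmetric] by auto
  qed
qed



lemma fermat_int:
  fixes r :: nat and x :: int
  assumes "prime r" "\<not> int r dvd x"
  shows "[x ^ (r - 1) = 1] (mod int r)"
proof -
  define c where "c = nat (x mod int r)"
  have r0: "0 < r" using assms(1) prime_gt_0_nat by blast
  have ic: "int c = x mod int r" unfolding c_def using r0 by simp
  have "\<not> r dvd c"
  proof
    assume "r dvd c"
    then have "int r dvd int c" by simp
    then have "int r dvd x mod int r" using ic by simp
    then show False using assms(2) by (simp add: dvd_mod_iff)
  qed
  then have "[c ^ (r - 1) = 1] (mod r)" using fermat_theorem[OF assms(1)] by blast
  then have "[int (c ^ (r - 1)) = int 1] (mod int r)" by (simp only: cong_int_iff)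
  then have "[int c ^ (r - 1) = 1] (mod int r)" by simp
  moreover have "[int c = x] (mod int r)" using ic by (simp add: cong_def)
  ultimately show ?thesis using cong_pow cong_sym cong_trans by blast
qed

lemma prime_even_nat: "prime (r::nat) \<Longrightarrow> even r \<Longrightarrow> r = 2"
  using primes_dvd_imp_eq[of 2 r] two_is_prime_nat by auto

lemma key_contra:
  fixes p r :: nat and g :: int
  assumes pp: "prime p" "odd p" and og: "odd g" and pr: "int_primroot p g"
    and rp: "prime r" and rS: "int r dvd S2 p g" and rN: "int r dvd 2 ^ p + 1"
  shows False
proof -
  have p2: "2 < p" using pp prime_ge_2_nat[OF pp(1)] by (cases "p = 2") auto
  define L where "L x = Legendre x (int p)" for x
  define s where "s i = seq_s p g i" for i
  define N :: int where "N = 2 ^ p + 1"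
  define B where "B = (\<Sum>i<p. s (i+p) * 2^i)"
  define T where "T = (\<Sum>i<p. (s i - s (i+p)) * 2^i)"
  have "S2 p g - T = N * B"
    unfolding S2_split T_def B_def N_def s_def
    by (simp add: sum_subtractf left_diff_distrib algebra_simps)
  then have "[S2 p g = T] (mod N)" by (simp add: cong_iff_dvd_diff)
  then have "[S2 p g = T] (mod int r)" using rN unfolding N_def by (rule cong_dvd_modulus)
  moreover have "[S2 p g = 0] (mod int r)" using rS by (simp add: cong_0_iff)
  ultimately have T0: "[T = 0] (mod int r)" using cong_sym cong_trans by blast
  have r2: "r \<noteq> 2"
  proof
    assume "r = 2"
    then have "(2::int) dvd 2 ^ p + 1" using rN by simp
    moreover have "(2::int) dvd 2 ^ p" using p2 by simp
    ultimately have "(2::int) dvd 1" using dvd_diff by fastforce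
    then show False by simp
  qed
  have s0: "s 0 = 1" unfolding s_def seq_s_def C1_def by simp
  have sp: "s p = 0"
  proof -
    have "p < 2*p" using p2 by simp
    moreover have "Legendre (int p) (int p) = 0" by (rule Legendre_zero) (simp add: cong_def)
    ultimately show ?thesis unfolding s_def using seq_s_val[of p p g] C1_char[OF pp og pr, of p] pp(2) p2
      by simp
  qed
  have "{..<p} = insert 0 {1..<p}" using p2 by auto
  then have T1: "T = 1 + (\<Sum>i\<in>{1..<p}. (s i - s (i+p)) * 2^i)"
    unfolding T_def using s0 sp by simp
  have "\<not> [2 = 0] (mod int p)" using p2 by (simp add: cong_def)
  then have e: "L 2 = 1 \<or> L 2 = -1" unfolding L_def by (rule Legendre_unit)
  show False
  proof (cases "L 2 = 1")
    case True
    have "(\<Sum>i\<in>{1..<p}. (s i - s (i+p)) * 2^i) = 0"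
      by (rule sum.neutral) (use d_val[OF pp og pr] True in \<open>auto simp: s_def L_def\<close>)
    then have "T = 1" using T1 by simp
    then have "int r dvd 1" using T0 by (simp add: cong_0_iff)
    then show False using rp by simp
  next
    case False
    then have L2: "L 2 = -1" using e by simp
    define \<gamma> :: int where "\<gamma> = -2"
    define G where "G = (\<Sum>i\<in>{1..<p}. L (int i) * \<gamma> ^ i)"
    have "(\<Sum>i\<in>{1..<p}. (s i - s (i+p)) * 2^i) = G"
      unfolding G_def
    proof (rule sum.cong[OF refl])
      fix i assume "i \<in> {1..<p}"
      then have "s i - s (i+p) = (-1)^i * L (int i)"
        using d_val[OF pp og pr, of i] False unfolding s_def L_def by simp
      moreover have "\<gamma> ^ i = (-1)^i * 2^i" unfolding \<gamma>_def
        by (metis mult_minus1 power_mult_distrib)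
      ultimately show "(s i - s (i+p)) * 2^i = L (int i) * \<gamma> ^ i" by simp
    qed
    then have TG: "T = 1 + G" using T1 by simp
    then have G1: "[G = -1] (mod int r)" using T0 by (simp add: cong_iff_dvd_diff algebra_simps)
    have rpi: "prime (int r)" using rp by (simp add: prime_nat_int_transfer)
    have ndg: "\<not> int r dvd \<gamma>"
    proof
      assume "int r dvd \<gamma>"
      then have "r dvd 2" unfolding \<gamma>_def by (metis dvd_minus_iff int_dvd_int_iff of_nat_numeral)
      then have "r = 2" using primes_dvd_imp_eq[OF rp two_is_prime_nat] by simp
      then show False using r2 by simp
    qed
    have gp: "[\<gamma> ^ p = 1] (mod int r)"
    proof -
      have "\<gamma> ^ p - 1 = - (2 ^ p + 1)" unfolding \<gamma>_def using pp(2) by (simp add: power_minus_odd)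
      moreover have "int r dvd - (2 ^ p + 1)" using rN by (simp only: dvd_minus_iff)
      ultimately show ?thesis by (simp add: cong_iff_dvd_diff)
    qed
    show False
    proof (cases "[\<gamma> = 1] (mod int r)")
      case True
      have "[G = (\<Sum>i\<in>{1..<p}. L (int i) * 1)] (mod int r)"
        unfolding G_def
      proof (rule cong_sum)
        fix i show "[L (int i) * \<gamma> ^ i = L (int i) * 1] (mod int r)"
          using cong_mult[OF cong_refl cong_pow[OF True, of i]] by simp
      qed
      moreover have "(\<Sum>i\<in>{1..<p}. L (int i) * 1) = 0"
        using sum_Legendre_zero[OF pp(1) p2, of 2] L2 unfolding L_def by simp
      ultimately have "[0 = -1] (mod int r)" using G1 cong_sym cong_trans by fastforce
      then have "int r dvd 1" by (simp add: cong_iff_dvd_diff)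
      then show False using rp by simp
    next
      case ng: False
      have "[G^2 = L (int (p - 1)) * int p] (mod int r)"
        using gauss_sq[OF pp(1) p2 rp gp ng, of 2] L2 unfolding G_def L_def by simp
      moreover have "[G^2 = (-1)^2] (mod int r)" using cong_pow[OF G1] .
      ultimately have key: "[L (int (p - 1)) * int p = 1] (mod int r)"
        using cong_sym cong_trans by fastforce
      have fr: "[\<gamma> ^ (r - 1) = 1] (mod int r)" using fermat_int[OF rp ndg] .
      have "p dvd r - 1"
      proof (rule ccontr)
        assume "\<not> p dvd r - 1"
        then have "coprime p (r - 1)" using prime_imp_coprime[OF pp(1)] by blast
        then have "gcd p (r - 1) = 1" by simp
        moreover have "[\<gamma> ^ gcd p (r - 1) = 1] (mod int r)"
          by (rule pow_gcd_cong[OF gp fr]) (use p2 in simp)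
        ultimately show False using ng by simp
      qed
      moreover have "0 < r - 1" using rp prime_ge_2_nat[OF rp] by simp
      ultimately have pr1: "p \<le> r - 1" by (rule dvd_imp_le)
      have "L (int (p - 1)) = 1 \<or> L (int (p - 1)) = -1"
        using Legendre_nz[of "p - 1" p] p2 unfolding L_def by simp
      then show False
      proof
        assume "L (int (p - 1)) = 1"
        then have "int r dvd int p - 1" using key by (simp add: cong_iff_dvd_diff)
        then have "int r dvd int (p - 1)" using p2 by (simp add: of_nat_diff)
        then have "r dvd p - 1" by simp
        then have "r \<le> p - 1" using p2 by (intro dvd_imp_le) auto
        then show False using pr1 p2 by simp
      next
        assume "L (int (p - 1)) = -1"
        then have "int r dvd - int p - 1" using key by (simp add: cong_iff_dvd_diff)
        then have "int r dvd int (p + 1)" by (metis dvd_minus_iff minus_diff_eq diff_minus_eq_add of_nat_add of_nat_1 add.commute)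
        then have "r dvd p + 1" by (simp only: int_dvd_int_iff)
        then have "r \<le> p + 1" by (intro dvd_imp_le) auto
        then have "r = p + 1" using pr1 prime_gt_0_nat[OF rp] by simp
        then have "even r" using pp(2) by simp
        then have "r = 2" using prime_even_nat[OF rp] by simp
        then show False using r2 by simp
      qed
    qed
  qed
qed

theorem lemma10:
  fixes p :: nat and g :: int
  assumes "prime p" and "odd p" and "odd g"
    and "int_primroot p g" and "int_primroot (2*p) g"
  shows "gcd (S2 p g) (2 ^ p + 1) = 1"
proof (rule ccontr)
  define d where "d = gcd (S2 p g) (2 ^ p + 1)"
  assume "gcd (S2 p g) (2 ^ p + 1) \<noteq> 1"
  then have d1: "d \<noteq> 1" unfolding d_def .
  have "(2::int) ^ p + 1 \<noteq> 0" by (smt (verit) zero_le_power)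
  then have d0: "d \<noteq> 0" unfolding d_def by simp
  have "0 \<le> d" unfolding d_def by simp
  then have "\<not> is_unit d" using d1 by auto
  then obtain q where q: "q dvd d" "prime q" using prime_divisor_exists[OF d0] by blast
  have q0: "0 < q" using q(2) by (simp add: prime_gt_0_int)
  define r where "r = nat q"
  have rq: "int r = q" unfolding r_def using q0 by simp
  have rp: "prime r" using q(2) rq prime_nat_int_transfer by metis
  have "int r dvd S2 p g" "int r dvd 2 ^ p + 1" using q(1) rq unfolding d_def by auto
  then show False using key_contra[OF assms(1-4) rp] by blast
qed


end
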